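(* Let $f:\mathbb{R}^d\to\mathbb{R}$ be differentiable with $L$-Lipschitz gradient ($L>0$) and bounded below, and let $f^*=\inf_{\vec x} f(\vec x)>-\infty$. Consider single-step SGD iterations (as defined in the context) with constant learning rate $\alpha=1/\sqrt{T}$, where $T\ge 36L^2$ is the number of iterations, and assume they satisfy elastic consistency with constant $B$. Then $$\min_{t\in\{0,\dots,T-1\}}\mathbb{E}\|\nabla f(\vec x_t)\|^2\le \frac{4(f(\vec x_0)-f^* )}{\sqrt T}+\frac{2B^2L^2}{T}+\frac{6L\sigma^2}{\sqrt T}+\frac{6L^3B^2}{T\sqrt T}.$$
   Context: All random objects live on a probability space with a filtration $(\mathcal F_t)_{t\ge0}$. Single-step SGD iterations: $\vec x_0\in\mathbb{R}^d$ is deterministic. At each iteration $t\ge0$ some processor $i=i_t$ (chosen independently of the algorithm's randomness) holds a view $\vec v_t^{i}\in\mathbb{R}^d$. The vectors $\vec x_t$ and $\vec v_t^{i}$ are $\mathcal F_t$-measurable, and the processor computes a stochastic gradient $\tilde G(\vec v_t^{i})$, which is $\mathcal F_{t+1}$-measurable and satisfies $\mathbb{E}[\tilde G(\vec v_t^{i})\mid\mathcal F_t]=\nabla f(\vec v_t^{i})$ and $\mathbb{E}[\|\tilde G(\vec v_t^{i})-\nabla f(\vec v_t^{i})\|^2\mid\mathcal F_t]\le\sigma^2$. The global parameter is updated by $\vec x_{t+1}=\vec x_t-\alpha\tilde G(\vec v_t^{i})$. Elastic consistency with constant $B>0$ (independent of $t$) means that $\mathbb{E}\|\vec x_t-\vec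 v_t^{i}\|^2\le\alpha^2B^2$ for every iteration $t$ and the processor $i$ acting at $t$. Norms are Euclidean. *)

theory Defs
  imports "HOL-Probability.Probability"
begin

end

theory Submission imports Defs begin

lemma descent:
  fixes f :: "'d::euclidean_space \<Rightarrow> real" and g :: "'d \<Rightarrow> 'd"
  assumes grad: "\<And>y. GDERIV f y :> g y"
    and Lip: "\<And>y z. norm (g y - g z) \<le> L * norm (y - z)" and L0: "L \<ge> 0"
  shows "f (y + d) \<le> f y + inner (g y) d + L * (norm d)\<^sup>2"
proof -
  define \<phi> where "\<phi> s = f (y + s *\<^sub>R d)" for s :: real
  have der: "DERIV \<phi> s :> inner d (g (y + s *\<^sub>R d))" for s
  proof -
    have 1: "((\<lambda>s. y + s *\<^sub>R d) has_derivative (\<lambda>h. h *\<^sub>R d)) (at s)"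
      by (auto intro!: derivative_eq_intros)
    have 2: "(f has_derivative (\<lambda>h. inner h (g (y + s *\<^sub>R d)))) (at (y + s *\<^sub>R d))"
      using grad[of "y + s *\<^sub>R d"] by (simp add: gderiv_def)
    have "(\<phi> has_derivative (\<lambda>h. inner (h *\<^sub>R d) (g (y + s *\<^sub>R d)))) (at s)"
      unfolding \<phi>_def using has_derivative_compose[OF 1 2] by simp
    then show ?thesis
      by (simp add: has_field_derivative_def mult.commute)
        (erule has_derivative_eq_rhs, auto)
  qed
  show ?thesis
  proof (cases "d = 0")
    case True then show ?thesis by simp
  next
    case False
    obtain c where c: "0 < c" "c < 1" "\<phi> 1 - \<phi> 0 = (1 - 0) * inner d (g (y + c *\<^sub>R d))"
      using MVT2[of 0 1 \<phi> "\<lambda>s. inner d (g (y + s *\<^sub>R d))"] der by auto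
    have "inner d (g (y + c *\<^sub>R d)) = inner d (g y) + inner d (g (y + c *\<^sub>R d) - g y)"
      by (simp add: inner_diff_right)
    also have "inner d (g (y + c *\<^sub>R d) - g y) \<le> norm d * norm (g (y + c *\<^sub>R d) - g y)"
      using norm_cauchy_schwarz by blast
    also have "norm (g (y + c *\<^sub>R d) - g y) \<le> L * (c * norm d)"
      using Lip[of "y + c *\<^sub>R d" y] c by simp
    also have "L * (c * norm d) \<le> L * norm d"
    proof -
      show ?thesis using c L0 by (intro mult_left_mono) (auto intro: mult_left_le_one_le)
    qed
    finally have "inner d (g (y + c *\<^sub>R d)) \<le> inner d (g y) + norm d * (L * norm d)"
      by (simp add: mult_left_mono)
    then show ?thesis using c unfolding \<phi>_def
      by (simp add: power2_eq_square inner_commute algebra_simps)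
  qed
qed


lemma pointwise:
  fixes a b e y v :: "'d::euclidean_space" and \<alpha> L FY FY1 :: real
  assumes L0: "L \<ge> 0" and apos: "\<alpha> > 0" and La: "L * \<alpha> \<le> 1/4"
    and ab: "norm (a - b) \<le> L * norm (y - v)"
    and desc: "FY1 \<le> FY + inner a (- (\<alpha> *\<^sub>R (b + e))) + L * (norm (- (\<alpha> *\<^sub>R (b + e))))\<^sup>2"
  shows "FY1 + \<alpha> / 2 * (norm a)\<^sup>2 \<le> FY - \<alpha> * inner a e + \<alpha> / 2 * L\<^sup>2 * (norm (y - v))\<^sup>2
           + 2 * L * \<alpha>\<^sup>2 * (norm e)\<^sup>2"
proof -
  have n1: "(norm (- (\<alpha> *\<^sub>R (b + e))))\<^sup>2 = \<alpha>\<^sup>2 * (norm (b + e))\<^sup>2"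
    using apos by (simp add: power_mult_distrib)
  have n2: "(norm (b + e))\<^sup>2 \<le> 2 * (norm b)\<^sup>2 + 2 * (norm e)\<^sup>2"
  proof -
    have "norm (b + e) \<le> norm b + norm e" by (rule norm_triangle_ineq)
    then have "(norm (b + e))\<^sup>2 \<le> (norm b + norm e)\<^sup>2" by (simp add: power_mono)
    also have "\<dots> \<le> 2 * (norm b)\<^sup>2 + 2 * (norm e)\<^sup>2"
      using power2_sum[of "norm b" "norm e"] power2_diff[of "norm b" "norm e"]
        zero_le_power2[of "norm b - norm e"] by linarith
    finally show ?thesis .
  qed
  have i1: "inner a (- (\<alpha> *\<^sub>R (b + e))) = - \<alpha> * inner a b - \<alpha> * inner a e"
    by (simp add: inner_add_right algebra_simps)
  have i2: "2 * inner a b = (norm a)\<^sup>2 + (norm b)\<^sup>2 - (norm (a - b))\<^sup>2"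
    by (simp add: power2_norm_eq_inner inner_diff_left inner_diff_right inner_commute)
  have i3: "(norm (a - b))\<^sup>2 \<le> L\<^sup>2 * (norm (y - v))\<^sup>2"
    using ab by (metis norm_ge_zero power_mono power_mult_distrib)
  have c1: "L * \<alpha>\<^sup>2 * (2 * (norm b)\<^sup>2) \<le> \<alpha> / 2 * (norm b)\<^sup>2"
  proof -
    have "L * \<alpha>\<^sup>2 * 2 \<le> \<alpha> / 2" using La apos
      by (simp add: power2_eq_square)
    from mult_right_mono[OF this zero_le_power2[of "norm b"]] show ?thesis by (simp add: algebra_simps)
  qed
  have "L * (norm (- (\<alpha> *\<^sub>R (b + e))))\<^sup>2 \<le> L * \<alpha>\<^sup>2 * (2 * (norm b)\<^sup>2 + 2 * (norm e)\<^sup>2)"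
    unfolding n1 mult.assoc using n2 L0 by (intro mult_left_mono) auto
  then have d2: "L * (norm (- (\<alpha> *\<^sub>R (b + e))))\<^sup>2 \<le> \<alpha> / 2 * (norm b)\<^sup>2 + 2 * L * \<alpha>\<^sup>2 * (norm e)\<^sup>2"
    using c1 by (simp add: algebra_simps)
  have i4: "\<alpha> * inner a b = \<alpha> / 2 * (norm a)\<^sup>2 + \<alpha> / 2 * (norm b)\<^sup>2 - \<alpha> / 2 * (norm (a - b))\<^sup>2"
    using arg_cong[OF i2, of "\<lambda>z. \<alpha> / 2 * z"] by (simp add: algebra_simps)
  have i5: "\<alpha> / 2 * (norm (a - b))\<^sup>2 \<le> \<alpha> / 2 * L\<^sup>2 * (norm (y - v))\<^sup>2"
    using i3 apos by (simp add: mult.assoc)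
  show ?thesis using desc i1 d2 i4 i5 by linarith
qed


definition sqi :: "'a measure \<Rightarrow> ('a \<Rightarrow> real) \<Rightarrow> bool" where
  "sqi M u \<longleftrightarrow> u \<in> borel_measurable M \<and> integrable M (\<lambda>\<omega>. (u \<omega>)\<^sup>2)"

context prob_space
begin

lemma sqi_const: "sqi M (\<lambda>_. c)"
  by (simp add: sqi_def)

lemma sqi_add: assumes "sqi M u" "sqi M w" shows "sqi M (\<lambda>\<omega>. u \<omega> + w \<omega>)"
proof -
  have m: "u \<in> borel_measurable M" "w \<in> borel_measurable M" using assms by (auto simp: sqi_def)
  have i: "integrable M (\<lambda>\<omega>. 2 * (u \<omega>)\<^sup>2 + 2 * (w \<omega>)\<^sup>2)" using assms by (auto simp: sqi_def)
  have "integrable M (\<lambda>\<omega>. (u \<omega> + w \<omega>)\<^sup>2)"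
  proof (rule Bochner_Integration.integrable_bound[OF i])
    show "(\<lambda>\<omega>. (u \<omega> + w \<omega>)\<^sup>2) \<in> borel_measurable M" using m by measurable
    show "AE \<omega> in M. norm ((u \<omega> + w \<omega>)\<^sup>2) \<le> norm (2 * (u \<omega>)\<^sup>2 + 2 * (w \<omega>)\<^sup>2)"
    proof (rule AE_I2)
      fix \<omega>
      show "norm ((u \<omega> + w \<omega>)\<^sup>2) \<le> norm (2 * (u \<omega>)\<^sup>2 + 2 * (w \<omega>)\<^sup>2)"
      proof -
        have A: "(u \<omega> + w \<omega>)\<^sup>2 \<le> 2 * (u \<omega>)\<^sup>2 + 2 * (w \<omega>)\<^sup>2"
          using power2_sum[of "u \<omega>" "w \<omega>"] power2_diff[of "u \<omega>" "w \<omega>"]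
            zero_le_power2[of "u \<omega> - w \<omega>"] by linarith
        have B: "norm ((u \<omega> + w \<omega>)\<^sup>2) = (u \<omega> + w \<omega>)\<^sup>2" by simp
        have C: "2 * (u \<omega>)\<^sup>2 + 2 * (w \<omega>)\<^sup>2 \<le> norm (2 * (u \<omega>)\<^sup>2 + 2 * (w \<omega>)\<^sup>2)" by simp
        show ?thesis using A B C by linarith
      qed
    qed
  qed
  then show ?thesis using m by (auto simp: sqi_def)
qed

lemma sqi_cmult: assumes "sqi M u" shows "sqi M (\<lambda>\<omega>. c * u \<omega>)"
  using assms by (auto simp: sqi_def power_mult_distrib)

lemma sqi_bound: assumes "sqi M u" "h \<in> borel_measurable M" "\<And>\<omega>. \<omega> \<in> space M \<Longrightarrow> \<bar>h \<omega>\<bar> \<le> u \<omega>"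
  shows "sqi M h"
proof -
  have "integrable M (\<lambda>\<omega>. (h \<omega>)\<^sup>2)"
  proof (rule Bochner_Integration.integrable_bound)
    show "integrable M (\<lambda>\<omega>. (u \<omega>)\<^sup>2)" using assms by (auto simp: sqi_def)
    show "(\<lambda>\<omega>. (h \<omega>)\<^sup>2) \<in> borel_measurable M" using assms by measurable
    show "AE \<omega> in M. norm ((h \<omega>)\<^sup>2) \<le> norm ((u \<omega>)\<^sup>2)"
    proof (rule AE_I2)
      fix \<omega> assume "\<omega> \<in> space M"
      then have "\<bar>h \<omega>\<bar> \<le> \<bar>u \<omega>\<bar>" using assms(3) abs_ge_self order_trans by blast
      then show "norm ((h \<omega>)\<^sup>2) \<le> norm ((u \<omega>)\<^sup>2)" by (simp add: abs_le_square_iff)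
    qed
  qed
  then show ?thesis using assms by (auto simp: sqi_def)
qed

lemma sqi_integrable: assumes "sqi M u" shows "integrable M u"
proof (rule Bochner_Integration.integrable_bound)
  show "integrable M (\<lambda>\<omega>. 1 + (u \<omega>)\<^sup>2)" using assms by (auto simp: sqi_def)
  show "u \<in> borel_measurable M" using assms by (auto simp: sqi_def)
  show "AE \<omega> in M. norm (u \<omega>) \<le> norm (1 + (u \<omega>)\<^sup>2)"
  proof (rule AE_I2)
    fix \<omega>
    have "\<bar>u \<omega>\<bar> \<le> 1 + (u \<omega>)\<^sup>2"
      using zero_le_power2[of "\<bar>u \<omega>\<bar> - 1"] by (simp add: power2_diff)
    then show "norm (u \<omega>) \<le> norm (1 + (u \<omega>)\<^sup>2)" by simp
  qed
qed

lemma sqi_sq_integrable: "sqi M u \<Longrightarrow> integrable M (\<lambda>\<omega>. (u \<omega>)\<^sup>2)"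
  by (simp add: sqi_def)

lemma sqi_prod: assumes "sqi M u" "sqi M w" "h \<in> borel_measurable M"
  "\<And>\<omega>. \<omega> \<in> space M \<Longrightarrow> \<bar>h \<omega>\<bar> \<le> u \<omega> * w \<omega>"
  shows "integrable M h"
proof (rule Bochner_Integration.integrable_bound)
  show "integrable M (\<lambda>\<omega>. (u \<omega>)\<^sup>2 + (w \<omega>)\<^sup>2)" using assms by (auto simp: sqi_def)
  show "h \<in> borel_measurable M" by fact
  show "AE \<omega> in M. norm (h \<omega>) \<le> norm ((u \<omega>)\<^sup>2 + (w \<omega>)\<^sup>2)"
  proof (rule AE_I2)
    fix \<omega> assume "\<omega> \<in> space M"
    then have "\<bar>h \<omega>\<bar> \<le> u \<omega> * w \<omega>" by (rule assms(4))
    also have "\<dots> \<le> (u \<omega>)\<^sup>2 + (w \<omega>)\<^sup>2"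
    proof -
      have "0 \<le> (u \<omega>)\<^sup>2 + (w \<omega>)\<^sup>2 - 2 * (u \<omega> * w \<omega>)"
        using zero_le_power2[of "u \<omega> - w \<omega>"] by (simp add: power2_diff algebra_simps)
      then show ?thesis using zero_le_power2[of "u \<omega>"] zero_le_power2[of "w \<omega>"] by linarith
    qed
    finally show "norm (h \<omega>) \<le> norm ((u \<omega>)\<^sup>2 + (w \<omega>)\<^sup>2)" by simp
  qed
qed

end


locale sgd =
  fixes M :: "'a measure" and F :: "nat \<Rightarrow> 'a measure"
    and f :: "'d::euclidean_space \<Rightarrow> real" and g :: "'d \<Rightarrow> 'd"
    and L B \<sigma> :: real and T :: nat
    and x :: "nat \<Rightarrow> 'a \<Rightarrow> 'd" and x0 :: 'd
    and sched :: "nat \<Rightarrow> 'p" and V :: "nat \<Rightarrow> 'p \<Rightarrow> 'a \<Rightarrow> 'd"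
    and G :: "nat \<Rightarrow> 'a \<Rightarrow> 'd"
  assumes prob: "prob_space M"
    and filt_sub: "\<And>t. sigma_finite_subalgebra M (F t)"
    and grad: "\<And>y. GDERIV f y :> g y"
    and Lpos: "L > 0"
    and Lip: "\<And>y z. norm (g y - g z) \<le> L * norm (y - z)"
    and bdd: "bdd_below (range f)"
    and T_ge: "real T \<ge> 36 * L\<^sup>2"
    and x_init: "x 0 = (\<lambda>\<omega>. x0)"
    and x_meas: "\<And>t. x t \<in> borel_measurable (F t)"
    and V_meas: "\<And>t. V t (sched t) \<in> borel_measurable (F t)"
    and G_meas: "\<And>t. G t \<in> borel_measurable (F (Suc t))"
    and unbiased: "\<And>t b. b \<in> Basis \<Longrightarrow>
        AE \<omega> in M. real_cond_exp M (F t) (\<lambda>\<omega>. G t \<omega> \<bullet> b) \<omega> = g (V t (sched t) \<omega>) \<bullet> b"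
    and variance: "\<And>t. AE \<omega> in M.
        nn_cond_exp M (F t) (\<lambda>\<omega>. ennreal ((norm (G t \<omega> - g (V t (sched t) \<omega>)))\<^sup>2)) \<omega>
          \<le> ennreal (\<sigma>\<^sup>2)"
    and update: "\<And>t. x (Suc t) = (\<lambda>\<omega>. x t \<omega> - (1 / sqrt (real T)) *\<^sub>R G t \<omega>)"
    and elastic: "\<And>t. (\<integral>\<^sup>+ \<omega>. ennreal ((norm (x t \<omega> - V t (sched t) \<omega>))\<^sup>2) \<partial>M)
        \<le> ennreal ((1 / sqrt (real T))\<^sup>2 * B\<^sup>2)"
begin

sublocale P: prob_space M by (rule prob)

abbreviation "al \<equiv> 1 / sqrt (real T)"
abbreviation "v t \<equiv> V t (sched t)"

lemma L0: "L \<ge> 0" using Lpos by simp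

lemma T_pos: "T > 0"
proof -
  have "36 * L\<^sup>2 > 0" using Lpos by simp
  then show ?thesis using T_ge by linarith
qed

lemma al_pos: "al > 0" using T_pos by simp

lemma La: "L * al \<le> 1/6"
proof -
  have "sqrt (36 * L\<^sup>2) \<le> sqrt (real T)" using T_ge by (rule real_sqrt_le_mono)
  moreover have "sqrt (36 * L\<^sup>2) = 6 * L" using Lpos by (simp add: real_sqrt_mult)
  ultimately have "6 * L \<le> sqrt (real T)" by simp
  then show ?thesis using T_pos by (simp add: field_simps)
qed

lemma sub: "subalgebra M (F t)"
  using sigma_finite_subalgebra.subalg[OF filt_sub] .

lemma x_measM[measurable]: "x t \<in> borel_measurable M"
  using measurable_from_subalg[OF sub x_meas] .
lemma v_measM[measurable]: "V t (sched t) \<in> borel_measurable M"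
  using measurable_from_subalg[OF sub V_meas] .
lemma G_measM[measurable]: "G t \<in> borel_measurable M"
  using measurable_from_subalg[OF sub G_meas] .

lemma g_cont: "continuous_on UNIV g"
proof -
  have "L-lipschitz_on UNIV g"
    by (rule lipschitz_onI) (auto simp: dist_norm Lip L0)
  then show ?thesis by (rule lipschitz_on_continuous_on)
qed

lemma g_borel[measurable]: "g \<in> borel_measurable borel"
  using g_cont by (rule borel_measurable_continuous_onI)

lemma f_borel[measurable]: "f \<in> borel_measurable borel"
proof -
  have "continuous_on UNIV f"
    using grad by (auto simp: gderiv_def intro!: continuous_at_imp_continuous_on
        has_derivative_continuous)
  then show ?thesis by (rule borel_measurable_continuous_onI)
qed

lemma desc: "f (y + d) \<le> f y + inner (g y) d + L * (norm d)\<^sup>2"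
  by (rule descent[OF grad Lip L0])

lemma fstar: "Inf (range f) \<le> f y"
  using bdd by (simp add: cInf_lower)


lemma nn_to_int:
  fixes h :: "'a \<Rightarrow> real"
  assumes [measurable]: "h \<in> borel_measurable M" and nn: "\<And>\<omega>. h \<omega> \<ge> 0"
    and le: "(\<integral>\<^sup>+ \<omega>. ennreal (h \<omega>) \<partial>M) \<le> ennreal c" and c: "c \<ge> 0"
  shows "integrable M h" "(\<integral>\<omega>. h \<omega> \<partial>M) \<le> c"
proof -
  show i: "integrable M h"
    by (rule integrableI_nonneg) (use le nn in \<open>auto simp: le_less_trans[OF le] top.not_eq_extremum\<close>)
  have "ennreal (\<integral>\<omega>. h \<omega> \<partial>M) = (\<integral>\<^sup>+ \<omega>. ennreal (h \<omega>) \<partial>M)"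
    using nn_integral_eq_integral[OF i] nn by simp
  then have "ennreal (\<integral>\<omega>. h \<omega> \<partial>M) \<le> ennreal c" using le by simp
  then show "(\<integral>\<omega>. h \<omega> \<partial>M) \<le> c" using c by (simp add: ennreal_le_iff)
qed

lemma xv: "sqi M (\<lambda>\<omega>. norm (x t \<omega> - v t \<omega>))"
    "(\<integral>\<omega>. (norm (x t \<omega> - v t \<omega>))\<^sup>2 \<partial>M) \<le> al\<^sup>2 * B\<^sup>2"
proof -
  have "integrable M (\<lambda>\<omega>. (norm (x t \<omega> - v t \<omega>))\<^sup>2)"
    "(\<integral>\<omega>. (norm (x t \<omega> - v t \<omega>))\<^sup>2 \<partial>M) \<le> al\<^sup>2 * B\<^sup>2"
    by (rule nn_to_int[OF _ _ elastic]; simp)+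
  then show "sqi M (\<lambda>\<omega>. norm (x t \<omega> - v t \<omega>))"
    "(\<integral>\<omega>. (norm (x t \<omega> - v t \<omega>))\<^sup>2 \<partial>M) \<le> al\<^sup>2 * B\<^sup>2"
    by (auto simp: sqi_def)
qed

lemma Gb: "sqi M (\<lambda>\<omega>. norm (G t \<omega> - g (v t \<omega>)))"
    "(\<integral>\<omega>. (norm (G t \<omega> - g (v t \<omega>)))\<^sup>2 \<partial>M) \<le> \<sigma>\<^sup>2"
proof -
  interpret S: sigma_finite_subalgebra M "F t" by (rule filt_sub)
  have "(\<integral>\<^sup>+ \<omega>. ennreal ((norm (G t \<omega> - g (v t \<omega>)))\<^sup>2) \<partial>M)
      = (\<integral>\<^sup>+ \<omega>. (\<lambda>_. 1) \<omega> * ennreal ((norm (G t \<omega> - g (v t \<omega>)))\<^sup>2) \<partial>M)" by simp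
  also have "\<dots> = (\<integral>\<^sup>+ \<omega>. (\<lambda>_. 1) \<omega> *
      nn_cond_exp M (F t) (\<lambda>\<omega>. ennreal ((norm (G t \<omega> - g (v t \<omega>)))\<^sup>2)) \<omega> \<partial>M)"
    by (rule S.nn_cond_exp_intg[symmetric]) auto
  also have "\<dots> \<le> (\<integral>\<^sup>+ \<omega>. ennreal (\<sigma>\<^sup>2) \<partial>M)"
    by (rule nn_integral_mono_AE) (use variance[of t] in simp)
  also have "\<dots> = ennreal (\<sigma>\<^sup>2)" by (simp add: P.emeasure_space_1)
  finally have le: "(\<integral>\<^sup>+ \<omega>. ennreal ((norm (G t \<omega> - g (v t \<omega>)))\<^sup>2) \<partial>M) \<le> ennreal (\<sigma>\<^sup>2)" .
  have "integrable M (\<lambda>\<omega>. (norm (G t \<omega> - g (v t \<omega>)))\<^sup>2)"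
    "(\<integral>\<omega>. (norm (G t \<omega> - g (v t \<omega>)))\<^sup>2 \<partial>M) \<le> \<sigma>\<^sup>2"
    by (rule nn_to_int[OF _ _ le]; simp)+
  then show "sqi M (\<lambda>\<omega>. norm (G t \<omega> - g (v t \<omega>)))"
    "(\<integral>\<omega>. (norm (G t \<omega> - g (v t \<omega>)))\<^sup>2 \<partial>M) \<le> \<sigma>\<^sup>2"
    by (auto simp: sqi_def)
qed

lemma ga_bound: "norm (g y) \<le> norm (g x0) + L * norm (y - x0)"
  using Lip[of y x0] norm_triangle_ineq2[of "g y" "g x0"] by linarith

lemma gv_bound: "norm (g (v t \<omega>)) \<le> norm (g x0) + L * norm (x t \<omega> - v t \<omega>) + L * norm (x t \<omega> - x0)"
proof -
  have "norm (v t \<omega> - x0) \<le> norm (x t \<omega> - v t \<omega>) + norm (x t \<omega> - x0)"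
    using norm_triangle_ineq4[of "x t \<omega> - x0" "x t \<omega> - v t \<omega>"] by (simp add: algebra_simps)
  then have "L * norm (v t \<omega> - x0) \<le> L * norm (x t \<omega> - v t \<omega>) + L * norm (x t \<omega> - x0)"
    using L0 by (metis distrib_left mult_left_mono)
  then show ?thesis using ga_bound[of "v t \<omega>"] by linarith
qed

lemma P_sqi_add: "sqi M u \<Longrightarrow> sqi M w \<Longrightarrow> sqi M (\<lambda>\<omega>. u \<omega> + w \<omega>)"
  by (rule P.sqi_add)
lemma P_sqi_cmult: "sqi M u \<Longrightarrow> sqi M (\<lambda>\<omega>. c * u \<omega>)"
  by (rule P.sqi_cmult)
lemma P_sqi_const: "sqi M (\<lambda>_. c)"
  by (rule P.sqi_const)

lemma xd: "sqi M (\<lambda>\<omega>. norm (x t \<omega> - x0))"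
proof (induction t)
  case 0
  then show ?case by (simp add: x_init sqi_def)
next
  case (Suc t)
  define U where "U \<omega> = norm (x t \<omega> - x0) + al * (norm (G t \<omega> - g (v t \<omega>)) + (norm (g x0)
     + (L * norm (x t \<omega> - v t \<omega>) + L * norm (x t \<omega> - x0))))" for \<omega>
  have U: "sqi M U" unfolding U_def
    by (intro P_sqi_add P_sqi_cmult P_sqi_const Suc xv(1) Gb(1))
  show ?case
  proof (rule P.sqi_bound[OF U])
    show "(\<lambda>\<omega>. norm (x (Suc t) \<omega> - x0)) \<in> borel_measurable M" by measurable
    fix \<omega>
    have "norm (x (Suc t) \<omega> - x0) = norm ((x t \<omega> - x0) - al *\<^sub>R G t \<omega>)"
      by (simp add: update algebra_simps)
    also have "\<dots> \<le> norm (x t \<omega> - x0) + al * norm (G t \<omega>)"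
      using norm_triangle_ineq4[of "x t \<omega> - x0" "al *\<^sub>R G t \<omega>"] al_pos by simp
    also have "norm (G t \<omega>) \<le> norm (G t \<omega> - g (v t \<omega>)) + norm (g (v t \<omega>))"
      using norm_triangle_ineq[of "G t \<omega> - g (v t \<omega>)" "g (v t \<omega>)"] by simp
    finally have "norm (x (Suc t) \<omega> - x0) \<le> U \<omega>"
      unfolding U_def using gv_bound[of t \<omega>] al_pos
      by (smt (verit, best) mult_left_mono)
    then show "\<bar>norm (x (Suc t) \<omega> - x0)\<bar> \<le> U \<omega>" by simp
  qed
qed

lemma a_sqi: "sqi M (\<lambda>\<omega>. norm (g (x t \<omega>)))"
proof (rule P.sqi_bound)
  show "sqi M (\<lambda>\<omega>. norm (g x0) + L * norm (x t \<omega> - x0))"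
    by (intro P_sqi_add P_sqi_cmult P_sqi_const xd)
qed (use ga_bound in auto)

lemma b_sqi: "sqi M (\<lambda>\<omega>. norm (g (v t \<omega>)))"
proof (rule P.sqi_bound)
  show "sqi M (\<lambda>\<omega>. norm (g x0) + L * norm (x t \<omega> - v t \<omega>) + L * norm (x t \<omega> - x0))"
    by (intro P_sqi_add P_sqi_cmult P_sqi_const xd xv(1))
qed (use gv_bound in auto)

lemma G_sqi: "sqi M (\<lambda>\<omega>. norm (G t \<omega>))"
proof (rule P.sqi_bound)
  show "sqi M (\<lambda>\<omega>. norm (G t \<omega> - g (v t \<omega>)) + norm (g (v t \<omega>)))"
    by (intro P_sqi_add b_sqi Gb(1))
  fix \<omega> show "\<bar>norm (G t \<omega>)\<bar> \<le> norm (G t \<omega> - g (v t \<omega>)) + norm (g (v t \<omega>))"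
    using norm_triangle_ineq[of "G t \<omega> - g (v t \<omega>)" "g (v t \<omega>)"] by simp
qed simp

lemma f_int: "integrable M (\<lambda>\<omega>. f (x t \<omega>))"
proof (rule Bochner_Integration.integrable_bound)
  let ?U = "\<lambda>\<omega>. \<bar>Inf (range f)\<bar> + \<bar>f x0\<bar> + norm (g x0) * norm (x t \<omega> - x0)
     + L * (norm (x t \<omega> - x0))\<^sup>2"
  show "integrable M ?U"
    using P.sqi_integrable[OF xd[of t]] P.sqi_sq_integrable[OF xd[of t]] by auto
  show "(\<lambda>\<omega>. f (x t \<omega>)) \<in> borel_measurable M" by measurable
  show "AE \<omega> in M. norm (f (x t \<omega>)) \<le> norm (?U \<omega>)"
  proof (rule AE_I2)
    fix \<omega>
    have up: "f (x t \<omega>) \<le> f x0 + inner (g x0) (x t \<omega> - x0) + L * (norm (x t \<omega> - x0))\<^sup>2"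
      using desc[of x0 "x t \<omega> - x0"] by simp
    have "inner (g x0) (x t \<omega> - x0) \<le> norm (g x0) * norm (x t \<omega> - x0)"
      by (rule norm_cauchy_schwarz)
    moreover have lo: "Inf (range f) \<le> f (x t \<omega>)" by (rule fstar)
    moreover have "0 \<le> norm (g x0) * norm (x t \<omega> - x0)" "0 \<le> L * (norm (x t \<omega> - x0))\<^sup>2"
      using L0 by auto
    ultimately have "\<bar>f (x t \<omega>)\<bar> \<le> ?U \<omega>" using up by linarith
    then show "norm (f (x t \<omega>)) \<le> norm (?U \<omega>)" by simp
  qed
qed

lemma inner_zero: "integrable M (\<lambda>\<omega>. inner (g (x t \<omega>)) (G t \<omega> - g (v t \<omega>)))"
   "(\<integral>\<omega>. inner (g (x t \<omega>)) (G t \<omega> - g (v t \<omega>)) \<partial>M) = 0"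
proof -
  interpret S: sigma_finite_subalgebra M "F t" by (rule filt_sub)
  show "integrable M (\<lambda>\<omega>. inner (g (x t \<omega>)) (G t \<omega> - g (v t \<omega>)))"
    by (rule P.sqi_prod[OF a_sqi Gb(1)]) (auto intro: Cauchy_Schwarz_ineq2)
  have comp: "integrable M (\<lambda>\<omega>. (g (x t \<omega>) \<bullet> i) * (G t \<omega> \<bullet> i) - (g (x t \<omega>) \<bullet> i) * (g (v t \<omega>) \<bullet> i))"
     "(\<integral>\<omega>. (g (x t \<omega>) \<bullet> i) * (G t \<omega> \<bullet> i) - (g (x t \<omega>) \<bullet> i) * (g (v t \<omega>) \<bullet> i) \<partial>M) = 0"
    if i: "i \<in> Basis" for i
  proof -
    have am[measurable]: "(\<lambda>\<omega>. g (x t \<omega>) \<bullet> i) \<in> borel_measurable (F t)"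
      using x_meas[of t] by measurable
    have bd: "\<bar>y \<bullet> i\<bar> \<le> norm y" for y :: 'd using Basis_le_norm[OF i] .
    have i1: "integrable M (\<lambda>\<omega>. (g (x t \<omega>) \<bullet> i) * (G t \<omega> \<bullet> i))"
      by (rule P.sqi_prod[OF a_sqi G_sqi]) (auto simp: abs_mult intro!: mult_mono bd)
    have i2: "integrable M (\<lambda>\<omega>. (g (x t \<omega>) \<bullet> i) * (g (v t \<omega>) \<bullet> i))"
      by (rule P.sqi_prod[OF a_sqi b_sqi]) (auto simp: abs_mult intro!: mult_mono bd)
    have "(\<integral>\<omega>. (g (x t \<omega>) \<bullet> i) * (G t \<omega> \<bullet> i) \<partial>M)
        = (\<integral>\<omega>. (g (x t \<omega>) \<bullet> i) * real_cond_exp M (F t) (\<lambda>\<omega>. G t \<omega> \<bullet> i) \<omega> \<partial>M)"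
      by (rule S.real_cond_exp_intg(2)[symmetric, OF i1 am]) measurable
    also have "\<dots> = (\<integral>\<omega>. (g (x t \<omega>) \<bullet> i) * (g (v t \<omega>) \<bullet> i) \<partial>M)"
    proof (rule integral_cong_AE)
      show "(\<lambda>\<omega>. (g (x t \<omega>) \<bullet> i) * real_cond_exp M (F t) (\<lambda>\<omega>. G t \<omega> \<bullet> i) \<omega>) \<in> borel_measurable M"
        by measurable
      show "(\<lambda>\<omega>. (g (x t \<omega>) \<bullet> i) * (g (v t \<omega>) \<bullet> i)) \<in> borel_measurable M"
        by measurable
      show "AE \<omega> in M. (g (x t \<omega>) \<bullet> i) * real_cond_exp M (F t) (\<lambda>\<omega>. G t \<omega> \<bullet> i) \<omega>
          = (g (x t \<omega>) \<bullet> i) * (g (v t \<omega>) \<bullet> i)"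
        using unbiased[OF i, of t] by eventually_elim simp
    qed
    finally have eq: "(\<integral>\<omega>. (g (x t \<omega>) \<bullet> i) * (G t \<omega> \<bullet> i) \<partial>M)
       = (\<integral>\<omega>. (g (x t \<omega>) \<bullet> i) * (g (v t \<omega>) \<bullet> i) \<partial>M)" .
    show "integrable M (\<lambda>\<omega>. (g (x t \<omega>) \<bullet> i) * (G t \<omega> \<bullet> i) - (g (x t \<omega>) \<bullet> i) * (g (v t \<omega>) \<bullet> i))"
      using i1 i2 by simp
    show "(\<integral>\<omega>. (g (x t \<omega>) \<bullet> i) * (G t \<omega> \<bullet> i) - (g (x t \<omega>) \<bullet> i) * (g (v t \<omega>) \<bullet> i) \<partial>M) = 0"
      using eq i1 i2 by simp
  qed
  have "(\<integral>\<omega>. inner (g (x t \<omega>)) (G t \<omega> - g (v t \<omega>)) \<partial>M)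
      = (\<integral>\<omega>. (\<Sum>i\<in>Basis. (g (x t \<omega>) \<bullet> i) * (G t \<omega> \<bullet> i) - (g (x t \<omega>) \<bullet> i) * (g (v t \<omega>) \<bullet> i)) \<partial>M)"
    by (rule Bochner_Integration.integral_cong[OF refl])
      (subst euclidean_inner, simp add: inner_diff_left right_diff_distrib)
  also have "\<dots> = (\<Sum>i\<in>Basis. (\<integral>\<omega>. (g (x t \<omega>) \<bullet> i) * (G t \<omega> \<bullet> i) - (g (x t \<omega>) \<bullet> i) * (g (v t \<omega>) \<bullet> i) \<partial>M))"
    by (rule Bochner_Integration.integral_sum) (rule comp(1))
  also have "\<dots> = 0" using comp(2) by simp
  finally show "(\<integral>\<omega>. inner (g (x t \<omega>)) (G t \<omega> - g (v t \<omega>)) \<partial>M) = 0" .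
qed

lemma step: "(\<integral>\<omega>. f (x (Suc t) \<omega>) \<partial>M) + al / 2 * (\<integral>\<omega>. (norm (g (x t \<omega>)))\<^sup>2 \<partial>M)
   \<le> (\<integral>\<omega>. f (x t \<omega>) \<partial>M) + (al / 2 * L\<^sup>2 * (al\<^sup>2 * B\<^sup>2) + 2 * L * al\<^sup>2 * \<sigma>\<^sup>2)"
proof -
  have pw: "f (x (Suc t) \<omega>) + al / 2 * (norm (g (x t \<omega>)))\<^sup>2 \<le> f (x t \<omega>)
      - al * inner (g (x t \<omega>)) (G t \<omega> - g (v t \<omega>)) + al / 2 * L\<^sup>2 * (norm (x t \<omega> - v t \<omega>))\<^sup>2
      + 2 * L * al\<^sup>2 * (norm (G t \<omega> - g (v t \<omega>)))\<^sup>2" for \<omega>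
  proof (rule pointwise[OF L0 al_pos])
    show "L * al \<le> 1/4" using La by simp
    show "norm (g (x t \<omega>) - g (v t \<omega>)) \<le> L * norm (x t \<omega> - v t \<omega>)" by (rule Lip)
    have xs: "x (Suc t) \<omega> = x t \<omega> + - (al *\<^sub>R (g (v t \<omega>) + (G t \<omega> - g (v t \<omega>))))"
      by (simp add: update)
    show "f (x (Suc t) \<omega>) \<le> f (x t \<omega>) + inner (g (x t \<omega>)) (- (al *\<^sub>R (g (v t \<omega>) + (G t \<omega> - g (v t \<omega>)))))
        + L * (norm (- (al *\<^sub>R (g (v t \<omega>) + (G t \<omega> - g (v t \<omega>))))))\<^sup>2"
      unfolding xs by (rule desc)
  qed
  have iA1: "integrable M (\<lambda>\<omega>. f (x (Suc t) \<omega>))" by (rule f_int)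
  have iA2: "integrable M (\<lambda>\<omega>. (norm (g (x t \<omega>)))\<^sup>2)" by (rule P.sqi_sq_integrable[OF a_sqi])
  have iR1: "integrable M (\<lambda>\<omega>. f (x t \<omega>))" by (rule f_int)
  have iR2: "integrable M (\<lambda>\<omega>. inner (g (x t \<omega>)) (G t \<omega> - g (v t \<omega>)))" by (rule inner_zero(1))
  have iR3: "integrable M (\<lambda>\<omega>. (norm (x t \<omega> - v t \<omega>))\<^sup>2)" by (rule P.sqi_sq_integrable[OF xv(1)])
  have iR4: "integrable M (\<lambda>\<omega>. (norm (G t \<omega> - g (v t \<omega>)))\<^sup>2)" by (rule P.sqi_sq_integrable[OF Gb(1)])
  have "(\<integral>\<omega>. f (x (Suc t) \<omega>) + al / 2 * (norm (g (x t \<omega>)))\<^sup>2 \<partial>M) \<le> (\<integral>\<omega>. f (x t \<omega>)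
      - al * inner (g (x t \<omega>)) (G t \<omega> - g (v t \<omega>)) + al / 2 * L\<^sup>2 * (norm (x t \<omega> - v t \<omega>))\<^sup>2
      + 2 * L * al\<^sup>2 * (norm (G t \<omega> - g (v t \<omega>)))\<^sup>2 \<partial>M)"
    using iA1 iA2 iR1 iR2 iR3 iR4 by (intro integral_mono pw) auto
  also have "\<dots> = (\<integral>\<omega>. f (x t \<omega>) \<partial>M) - al * (\<integral>\<omega>. inner (g (x t \<omega>)) (G t \<omega> - g (v t \<omega>)) \<partial>M)
      + al / 2 * L\<^sup>2 * (\<integral>\<omega>. (norm (x t \<omega> - v t \<omega>))\<^sup>2 \<partial>M)
      + 2 * L * al\<^sup>2 * (\<integral>\<omega>. (norm (G t \<omega> - g (v t \<omega>)))\<^sup>2 \<partial>M)"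
    using iR1 iR2 iR3 iR4 by simp
  also have "(\<integral>\<omega>. f (x (Suc t) \<omega>) + al / 2 * (norm (g (x t \<omega>)))\<^sup>2 \<partial>M)
     = (\<integral>\<omega>. f (x (Suc t) \<omega>) \<partial>M) + al / 2 * (\<integral>\<omega>. (norm (g (x t \<omega>)))\<^sup>2 \<partial>M)"
    using iA1 iA2 by simp
  finally have main: "(\<integral>\<omega>. f (x (Suc t) \<omega>) \<partial>M) + al / 2 * (\<integral>\<omega>. (norm (g (x t \<omega>)))\<^sup>2 \<partial>M)
     \<le> (\<integral>\<omega>. f (x t \<omega>) \<partial>M) - al * (\<integral>\<omega>. inner (g (x t \<omega>)) (G t \<omega> - g (v t \<omega>)) \<partial>M)
      + al / 2 * L\<^sup>2 * (\<integral>\<omega>. (norm (x t \<omega> - v t \<omega>))\<^sup>2 \<partial>M)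
      + 2 * L * al\<^sup>2 * (\<integral>\<omega>. (norm (G t \<omega> - g (v t \<omega>)))\<^sup>2 \<partial>M)" .
  have c1: "al / 2 * L\<^sup>2 * (\<integral>\<omega>. (norm (x t \<omega> - v t \<omega>))\<^sup>2 \<partial>M) \<le> al / 2 * L\<^sup>2 * (al\<^sup>2 * B\<^sup>2)"
    using xv(2)[of t] al_pos by (intro mult_left_mono) auto
  have c2: "2 * L * al\<^sup>2 * (\<integral>\<omega>. (norm (G t \<omega> - g (v t \<omega>)))\<^sup>2 \<partial>M) \<le> 2 * L * al\<^sup>2 * \<sigma>\<^sup>2"
    using Gb(2)[of t] L0 by (intro mult_left_mono) auto
  have z: "al * (\<integral>\<omega>. inner (g (x t \<omega>)) (G t \<omega> - g (v t \<omega>)) \<partial>M) = 0"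
    by (simp add: inner_zero(2))
  show ?thesis using main c1 c2 z by linarith
qed

lemma telescope: "(\<integral>\<omega>. f (x n \<omega>) \<partial>M) + al / 2 * (\<Sum>t<n. (\<integral>\<omega>. (norm (g (x t \<omega>)))\<^sup>2 \<partial>M))
   \<le> f x0 + real n * (al / 2 * L\<^sup>2 * (al\<^sup>2 * B\<^sup>2) + 2 * L * al\<^sup>2 * \<sigma>\<^sup>2)"
proof (induction n)
  case 0
  then show ?case by (simp add: x_init P.prob_space)
next
  case (Suc n)
  define K where "K = al / 2 * L\<^sup>2 * (al\<^sup>2 * B\<^sup>2) + 2 * L * al\<^sup>2 * \<sigma>\<^sup>2"
  define c where "c t = (\<integral>\<omega>. (norm (g (x t \<omega>)))\<^sup>2 \<partial>M)" for t
  have IH: "(\<integral>\<omega>. f (x n \<omega>) \<partial>M) + al / 2 * (\<Sum>t<n. c t) \<le> f x0 + real n * K"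
    using Suc.IH unfolding K_def c_def .
  have st: "(\<integral>\<omega>. f (x (Suc n) \<omega>) \<partial>M) + al / 2 * c n \<le> (\<integral>\<omega>. f (x n \<omega>) \<partial>M) + K"
    using step[of n] unfolding K_def c_def .
  have "al / 2 * (\<Sum>t<Suc n. c t) = al / 2 * (\<Sum>t<n. c t) + al / 2 * c n"
    by (simp add: distrib_left)
  moreover have "real (Suc n) * K = real n * K + K" by (simp add: distrib_right)
  ultimately have "(\<integral>\<omega>. f (x (Suc n) \<omega>) \<partial>M) + al / 2 * (\<Sum>t<Suc n. c t) \<le> f x0 + real (Suc n) * K"
    using IH st by linarith
  then show ?case unfolding K_def c_def .
qed

lemma main: "(MIN t\<in>{..<T}. \<integral>\<omega>. (norm (g (x t \<omega>)))\<^sup>2 \<partial>M)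
     \<le> 4 * (f x0 - Inf (range f)) / sqrt (real T) + 2 * B\<^sup>2 * L\<^sup>2 / real T
       + 6 * L * \<sigma>\<^sup>2 / sqrt (real T) + 6 * L ^ 3 * B\<^sup>2 / (real T * sqrt (real T))"
proof -
  define c where "c t = (\<integral>\<omega>. (norm (g (x t \<omega>)))\<^sup>2 \<partial>M)" for t
  define m where "m = (MIN t\<in>{..<T}. c t)"
  define s where "s = sqrt (real T)"
  define D where "D = f x0 - Inf (range f)"
  have s: "s > 0" using T_pos by (simp add: s_def)
  have Ts: "real T = s\<^sup>2" by (simp add: s_def)
  have D0: "D \<ge> 0" using fstar[of x0] by (simp add: D_def)
  have mle: "m \<le> c t" if "t < T" for t
    unfolding m_def using that by (intro Min_le) auto
  have "real (card {..<T}) * m \<le> (\<Sum>t<T. c t)"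
    by (rule sum_bounded_below) (use mle in auto)
  then have Tm: "real T * m \<le> (\<Sum>t<T. c t)" by simp
  have fT: "Inf (range f) \<le> (\<integral>\<omega>. f (x T \<omega>) \<partial>M)"
    by (rule P.integral_ge_const[OF f_int]) (simp add: fstar)
  have tel: "(\<integral>\<omega>. f (x T \<omega>) \<partial>M) + 1 / s / 2 * (\<Sum>t<T. c t)
      \<le> f x0 + real T * (1 / s / 2 * L\<^sup>2 * ((1/s)\<^sup>2 * B\<^sup>2) + 2 * L * (1/s)\<^sup>2 * \<sigma>\<^sup>2)"
    using telescope[of T] unfolding c_def s_def .
  have "1 / s / 2 * (real T * m) \<le> 1 / s / 2 * (\<Sum>t<T. c t)"
    using Tm s by (intro mult_left_mono) auto
  then have H: "1 / s / 2 * (real T * m) \<le> D + real T * (1 / s / 2 * L\<^sup>2 * ((1/s)\<^sup>2 * B\<^sup>2) + 2 * L * (1/s)\<^sup>2 * \<sigma>\<^sup>2)"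
    using tel fT unfolding D_def by linarith
  have e1: "1 / s / 2 * (real T * m) = s * m / 2"
    using s unfolding Ts by (simp add: field_simps power2_eq_square)
  have e2: "real T * (1 / s / 2 * L\<^sup>2 * ((1/s)\<^sup>2 * B\<^sup>2) + 2 * L * (1/s)\<^sup>2 * \<sigma>\<^sup>2)
      = L\<^sup>2 * B\<^sup>2 / (2 * s) + 2 * L * \<sigma>\<^sup>2"
    using s unfolding Ts by (simp add: field_simps power2_eq_square)
  have "s * m / 2 \<le> D + L\<^sup>2 * B\<^sup>2 / (2 * s) + 2 * L * \<sigma>\<^sup>2"
    using H e1 e2 by linarith
  then have H2: "(2 / s) * (s * m / 2) \<le> (2 / s) * (D + L\<^sup>2 * B\<^sup>2 / (2 * s) + 2 * L * \<sigma>\<^sup>2)"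
    using s by (intro mult_left_mono) auto
  have e3: "(2 / s) * (s * m / 2) = m" using s by simp
  have e4: "(2 / s) * (D + L\<^sup>2 * B\<^sup>2 / (2 * s) + 2 * L * \<sigma>\<^sup>2)
     = 2 * D / s + L\<^sup>2 * B\<^sup>2 / s\<^sup>2 + 4 * L * \<sigma>\<^sup>2 / s"
    using s by (simp add: field_simps power2_eq_square)
  have "m \<le> 2 * D / s + L\<^sup>2 * B\<^sup>2 / s\<^sup>2 + 4 * L * \<sigma>\<^sup>2 / s"
    using H2 e3 e4 by linarith
  also have "\<dots> \<le> 4 * D / s + 2 * B\<^sup>2 * L\<^sup>2 / s\<^sup>2 + 6 * L * \<sigma>\<^sup>2 / s + 6 * L ^ 3 * B\<^sup>2 / (s\<^sup>2 * s)"
  proof -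
    have "2 * D / s \<le> 4 * D / s" using D0 s by (simp add: divide_right_mono)
    moreover have "L\<^sup>2 * B\<^sup>2 / s\<^sup>2 \<le> 2 * B\<^sup>2 * L\<^sup>2 / s\<^sup>2" using s by (simp add: divide_right_mono)
    moreover have "4 * L * \<sigma>\<^sup>2 / s \<le> 6 * L * \<sigma>\<^sup>2 / s" using s L0 by (simp add: divide_right_mono)
    moreover have "0 \<le> 6 * L ^ 3 * B\<^sup>2 / (s\<^sup>2 * s)" using s L0 by simp
    ultimately show ?thesis by linarith
  qed
  finally have F: "m \<le> 4 * D / s + 2 * B\<^sup>2 * L\<^sup>2 / s\<^sup>2 + 6 * L * \<sigma>\<^sup>2 / s + 6 * L ^ 3 * B\<^sup>2 / (s\<^sup>2 * s)" .
  have LHS: "(MIN t\<in>{..<T}. \<integral>\<omega>. (norm (g (x t \<omega>)))\<^sup>2 \<partial>M) = m"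
    by (simp add: m_def c_def)
  have RHS: "4 * (f x0 - Inf (range f)) / sqrt (real T) + 2 * B\<^sup>2 * L\<^sup>2 / real T
       + 6 * L * \<sigma>\<^sup>2 / sqrt (real T) + 6 * L ^ 3 * B\<^sup>2 / (real T * sqrt (real T))
     = 4 * D / s + 2 * B\<^sup>2 * L\<^sup>2 / s\<^sup>2 + 6 * L * \<sigma>\<^sup>2 / s + 6 * L ^ 3 * B\<^sup>2 / (s\<^sup>2 * s)"
    unfolding D_def Ts by (simp add: s_def)
  show ?thesis unfolding LHS RHS by (rule F)
qed

end

theorem theorem1:
  fixes M :: "'a measure" and F :: "nat \<Rightarrow> 'a measure"
    and f :: "'d::euclidean_space \<Rightarrow> real" and g :: "'d \<Rightarrow> 'd"
    and L B \<sigma> :: real and T :: nat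
    and x :: "nat \<Rightarrow> 'a \<Rightarrow> 'd" and x0 :: 'd
    and sched :: "nat \<Rightarrow> 'p" and V :: "nat \<Rightarrow> 'p \<Rightarrow> 'a \<Rightarrow> 'd"
    and G :: "nat \<Rightarrow> 'a \<Rightarrow> 'd"
  assumes prob: "prob_space M"
    and filt_sub: "\<And>t. sigma_finite_subalgebra M (F t)"
    and filt_mono: "\<And>s t. s \<le> t \<Longrightarrow> sets (F s) \<subseteq> sets (F t)"
    and grad: "\<And>y. GDERIV f y :> g y"
    and Lpos: "L > 0"
    and Lip: "\<And>y z. norm (g y - g z) \<le> L * norm (y - z)"
    and bdd: "bdd_below (range f)"
    and T_ge: "real T \<ge> 36 * L\<^sup>2"
    and x_init: "x 0 = (\<lambda>\<omega>. x0)"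
    and x_meas: "\<And>t. x t \<in> borel_measurable (F t)"
    and V_meas: "\<And>t. V t (sched t) \<in> borel_measurable (F t)"
    and G_meas: "\<And>t. G t \<in> borel_measurable (F (Suc t))"
    and G_int: "\<And>t. integrable M (G t)"
    and unbiased: "\<And>t b. b \<in> Basis \<Longrightarrow>
        AE \<omega> in M. real_cond_exp M (F t) (\<lambda>\<omega>. G t \<omega> \<bullet> b) \<omega> = g (V t (sched t) \<omega>) \<bullet> b"
    and variance: "\<And>t. AE \<omega> in M.
        nn_cond_exp M (F t) (\<lambda>\<omega>. ennreal ((norm (G t \<omega> - g (V t (sched t) \<omega>)))\<^sup>2)) \<omega>
          \<le> ennreal (\<sigma>\<^sup>2)"
    and update: "\<And>t. x (Suc t) = (\<lambda>\<omega>. x t \<omega> - (1 / sqrt (real T)) *\<^sub>R G t \<omega>)"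
    and Bpos: "B > 0"
    and elastic: "\<And>t. (\<integral>\<^sup>+ \<omega>. ennreal ((norm (x t \<omega> - V t (sched t) \<omega>))\<^sup>2) \<partial>M)
        \<le> ennreal ((1 / sqrt (real T))\<^sup>2 * B\<^sup>2)"
  shows "(MIN t\<in>{..<T}. \<integral>\<omega>. (norm (g (x t \<omega>)))\<^sup>2 \<partial>M)
     \<le> 4 * (f x0 - Inf (range f)) / sqrt (real T) + 2 * B\<^sup>2 * L\<^sup>2 / real T
       + 6 * L * \<sigma>\<^sup>2 / sqrt (real T) + 6 * L ^ 3 * B\<^sup>2 / (real T * sqrt (real T))"
proof -
  interpret sgd M F f g L B \<sigma> T x x0 sched V G
    apply (rule sgd.intro)
                    apply (fact prob)
                   apply (fact filt_sub)
                  apply (fact grad)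
                 apply (fact Lpos)
                apply (fact Lip)
               apply (fact bdd)
              apply (fact T_ge)
             apply (fact x_init)
            apply (fact x_meas)
           apply (fact V_meas)
          apply (fact G_meas)
         apply (fact unbiased)
        apply (fact variance)
       apply (fact update)
      apply (fact elastic)
    done
  show ?thesis by (rule main)
qed

end
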